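(* In the setting described in the context, if Method 2 stops at iteration $k$ (i.e. $x^{k+1}=x^k$), then $x^k\in\operatorname{zer}(A+B)$.
   Context: Let $\mathcal H$ be a real Hilbert space with inner product $\langle\cdot,\cdot\rangle$ and norm $\|\cdot\|$. Let $A_1:\mathcal H\to\mathcal H$ be $\beta$-cocoercive for some $\beta>0$ (i.e. $\langle A_1x-A_1y,x-y\rangle\ge\beta\|A_1x-A_1y\|^2$ for all $x,y$), let $A_2:\mathcal H\to\mathcal H$ be maximally monotone and uniformly continuous, let $B:\mathcal H\rightrightarrows\mathcal H$ be maximally monotone, and set $A:=A_1+A_2$. Assume $\operatorname{zer}(A+B):=\{x:0\in Ax+Bx\}\neq\emptyset$. $J_{\alpha B}:=(I+\alpha B)^{-1}$ for $\alpha>0$, and $P_C$ denotes the orthogonal projection onto a nonempty closed convex set $C$. Fix $\theta,\delta\in(0,1)$, $\bar\delta>0$ with $1-\delta-\bar\delta>0$, and $\alpha_{-1}>0$ with $\alpha_{-1}\le4\beta\bar\delta$. Conceptual Algorithm: pick $x^0\in\mathcal H$. Given $x^k$ and $\alpha_{k-1}$, for $j\in\mathbb N$ let $\bar x^k_j:=J_{\alpha_{k-1}\theta^jB}(x^k-\alpha_{k-1}\theta^jAx^k)$ and let $j(k)$ be the smallest $j\in\mathbb N$ with $\alpha_{k-1}\theta^j\langle A_2x^k-A_2\bar x^k_j,x^k-\bar x^k_j\rangle\le\delta\|x^k-\bar x^k_j\|^2$. Set $\alpha_k:=\alpha_{k-1}\theta^{j(k)}$, $\bar x^k:=J_{\alpha_kB}(x^k-\alpha_kAx^k)$,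 $r_k:=\frac{\bar\delta}{\alpha_k}\|x^k-\bar x^k\|^2$, $T_k:=\{x\in\mathcal H:\langle \frac{x^k-\bar x^k}{\alpha_k}-(A_2x^k-A_2\bar x^k),x-\bar x^k\rangle\le r_k\}$ and $\Gamma_k:=\{x\in\mathcal H:\langle x^0-x^k,x-x^k\rangle\le0\}$. Method 2 sets $x^{k+1}:=P_{T_k\cap\Gamma_k}(x^0)$ and stops if $x^{k+1}=x^k$. *)

theory Defs
  imports "HOL-Analysis.Analysis"
begin

definition monotone_op :: "('a::real_inner \<Rightarrow> 'a set) \<Rightarrow> bool" where
  "monotone_op B \<longleftrightarrow> (\<forall>x y u v. u \<in> B x \<longrightarrow> v \<in> B y \<longrightarrow> inner (u - v) (x - y) \<ge> 0)"

definition maximal_monotone :: "('a::real_inner \<Rightarrow> 'a set) \<Rightarrow> bool" where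
  "maximal_monotone B \<longleftrightarrow> monotone_op B \<and>
     (\<forall>B'. monotone_op B' \<and> (\<forall>x. B x \<subseteq> B' x) \<longrightarrow> B' = B)"

definition cocoercive :: "real \<Rightarrow> ('a::real_inner \<Rightarrow> 'a) \<Rightarrow> bool" where
  "cocoercive \<beta> A \<longleftrightarrow> (\<forall>x y. inner (A x - A y) (x - y) \<ge> \<beta> * (norm (A x - A y))\<^sup>2)"

definition resolvent :: "real \<Rightarrow> ('a::real_inner \<Rightarrow> 'a set) \<Rightarrow> 'a \<Rightarrow> 'a" where
  "resolvent a B z = (THE y. \<exists>u \<in> B y. z = y + a *\<^sub>R u)"

definition proj :: "'a::real_inner set \<Rightarrow> 'a \<Rightarrow> 'a" where
  "proj C z = (THE p. p \<in> C \<and> (\<forall>y\<in>C. norm (z - p) \<le> norm (z - y)))"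

definition zer_sum :: "('a::real_inner \<Rightarrow> 'a) \<Rightarrow> ('a \<Rightarrow> 'a set) \<Rightarrow> 'a set" where
  "zer_sum A B = {x. \<exists>u \<in> B x. A x + u = 0}"

text \<open>Trial point  \<bar>x^k_j  with step size s = \<alpha>_{k-1} \<theta>^j.\<close>
definition trial_point :: "('a::real_inner \<Rightarrow> 'a) \<Rightarrow> ('a \<Rightarrow> 'a set) \<Rightarrow> real \<Rightarrow> 'a \<Rightarrow> 'a" where
  "trial_point A B s xk = resolvent s B (xk - s *\<^sub>R A xk)"

definition linesearch_j ::
  "('a::real_inner \<Rightarrow> 'a) \<Rightarrow> ('a \<Rightarrow> 'a) \<Rightarrow> ('a \<Rightarrow> 'a set) \<Rightarrow> real \<Rightarrow> real \<Rightarrow> real \<Rightarrow> 'a \<Rightarrow> nat" where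
  "linesearch_j A A2 B \<theta> \<delta> a xk =
     (LEAST j::nat. (a * \<theta> ^ j) * inner (A2 xk - A2 (trial_point A B (a * \<theta> ^ j) xk))
                                        (xk - trial_point A B (a * \<theta> ^ j) xk)
                    \<le> \<delta> * (norm (xk - trial_point A B (a * \<theta> ^ j) xk))\<^sup>2)"

definition T_set ::
  "('a::real_inner \<Rightarrow> 'a) \<Rightarrow> ('a \<Rightarrow> 'a) \<Rightarrow> ('a \<Rightarrow> 'a set) \<Rightarrow> real \<Rightarrow> real \<Rightarrow> 'a \<Rightarrow> 'a set" where
  "T_set A A2 B \<delta>' ak xk =
     (let xb = trial_point A B ak xk;
          r = (\<delta>' / ak) * (norm (xk - xb))\<^sup>2
      in {x. inner ((1 / ak) *\<^sub>R (xk - xb) - (A2 xk - A2 xb)) (x - xb) \<le> r})"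

definition Gamma_set :: "'a::real_inner \<Rightarrow> 'a \<Rightarrow> 'a set" where
  "Gamma_set x0 xk = {x. inner (x0 - xk) (x - xk) \<le> 0}"

end

theory Submission
  imports Defs
begin


lemma par_id:
  fixes m a b :: "'a::real_inner"
  shows "(norm (m - (1/2) *\<^sub>R (a + b)))\<^sup>2 = ((norm (m - a))\<^sup>2 + (norm (m - b))\<^sup>2)/2 - (norm (a - b))\<^sup>2/4"
  by (simp add: power2_norm_eq_inner inner_simps inner_commute field_simps)

lemma eps_le0:
  fixes X K :: real
  assumes "\<And>t. 0 < t \<Longrightarrow> t \<le> 1 \<Longrightarrow> X \<le> t * K"
  shows "X \<le> 0"
proof (rule ccontr)
  assume "\<not> X \<le> 0"
  hence X: "X > 0" by simp
  have K: "K \<ge> X" using assms[of 1] by simp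
  define t where "t = min 1 (X / (2*K))"
  have tp: "0 < t" "t \<le> 1" using X K by (auto simp: t_def)
  have "t * K \<le> (X/(2*K)) * K" using K X by (intro mult_right_mono) (auto simp: t_def)
  also have "\<dots> = X/2" using K X by (simp add: field_simps)
  finally show False using assms[OF tp] X by simp
qed

lemma max_mono_ext:
  assumes "maximal_monotone B"
    and "\<And>w v. v \<in> B w \<Longrightarrow> inner (u - v) (y - w) \<ge> 0"
  shows "u \<in> B y"
proof -
  define B' where "B' = (\<lambda>x. if x = y then insert u (B x) else B x)"
  have mB: "monotone_op B" using assms(1) by (simp add: maximal_monotone_def)
  have "monotone_op B'"
    unfolding monotone_op_def
  proof (intro allI impI)
    fix x1 x2 u1 u2 assume h: "u1 \<in> B' x1" "u2 \<in> B' x2"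
    show "inner (u1 - u2) (x1 - x2) \<ge> 0"
    proof (cases "u1 \<in> B x1")
      case True
      show ?thesis
      proof (cases "u2 \<in> B x2")
        case True2: True
        then show ?thesis using True mB unfolding monotone_op_def by blast
      next
        case False
        hence "x2 = y" "u2 = u" using h by (auto simp: B'_def split: if_splits)
        then show ?thesis using assms(2)[OF True]
          by (metis inner_minus_left inner_minus_right minus_diff_eq)
      qed
    next
      case False
      hence e: "x1 = y" "u1 = u" using h by (auto simp: B'_def split: if_splits)
      show ?thesis
      proof (cases "u2 \<in> B x2")
        case True
        then show ?thesis using assms(2)[OF True] e by simp
      next
        case False
        hence "x2 = y" "u2 = u" using h by (auto simp: B'_def split: if_splits)
        then show ?thesis using e by simp
      qed
    qed
  qed
  moreover have "\<forall>x. B x \<subseteq> B' x" by (auto simp: B'_def)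
  ultimately have "B' = B" using assms(1) by (simp add: maximal_monotone_def)
  thus ?thesis by (metis B'_def insertI1)
qed

lemma resolvent_unique:
  assumes "monotone_op B" "s > 0"
    and "u1 \<in> B y1" "z = y1 + s *\<^sub>R u1" "u2 \<in> B y2" "z = y2 + s *\<^sub>R u2"
  shows "y1 = y2"
proof -
  have d: "y1 - y2 = s *\<^sub>R (u2 - u1)" using assms(4,6) by (simp add: algebra_simps)
  have "inner (u1 - u2) (y1 - y2) \<ge> 0" using assms(1,3,5) unfolding monotone_op_def by blast
  hence "- s * inner (u1 - u2) (u1 - u2) \<ge> 0" unfolding d
    by (simp add: inner_diff_left inner_diff_right algebra_simps inner_commute)
  hence "inner (u1 - u2) (u1 - u2) \<le> 0" using assms(2)
    by (simp add: mult_le_0_iff)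
  hence "u1 = u2" using inner_ge_zero[of "u1 - u2"] by simp
  thus ?thesis using d by simp
qed

lemma closed_graph:
  assumes "maximal_monotone B" "y \<longlonglongrightarrow> y0" "u \<longlonglongrightarrow> u0" "\<And>j. u j \<in> B (y j)"
  shows "u0 \<in> B y0"
proof (rule max_mono_ext[OF assms(1)])
  fix w v assume v: "v \<in> B w"
  have mB: "monotone_op B" using assms(1) by (simp add: maximal_monotone_def)
  have "(\<lambda>j. inner (u j - v) (y j - w)) \<longlonglongrightarrow> inner (u0 - v) (y0 - w)"
    by (intro tendsto_intros assms(2,3))
  moreover have "\<forall>j. 0 \<le> inner (u j - v) (y j - w)" using mB assms(4) v unfolding monotone_op_def by blast
  ultimately show "0 \<le> inner (u0 - v) (y0 - w)" by (meson LIMSEQ_le_const)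
qed



lemma norm_sq_diff_scale:
  fixes a b :: "'a::real_inner"
  shows "(norm (a - t *\<^sub>R b))\<^sup>2 = (norm a)\<^sup>2 - 2*t*inner a b + t\<^sup>2*(norm b)\<^sup>2"
  unfolding power2_norm_eq_inner
  by (simp add: inner_diff_left inner_diff_right inner_commute[of b a] power2_eq_square algebra_simps)

lemma min_exists:
  fixes f :: "'a::{real_inner,complete_space} \<Rightarrow> real"
  assumes C: "closed C" "convex C" "C \<noteq> {}"
    and cont: "continuous_on UNIV f"
    and lb: "\<And>y. y \<in> C \<Longrightarrow> f y \<ge> L"
    and mid: "\<And>a b. a \<in> C \<Longrightarrow> b \<in> C \<Longrightarrow>
               f ((1/2) *\<^sub>R (a + b)) \<le> (f a + f b)/2 - (norm (a - b))\<^sup>2/4"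
  shows "\<exists>p\<in>C. \<forall>y\<in>C. f p \<le> f y"
proof -
  define m where "m = Inf (f ` C)"
  have bdd: "bdd_below (f ` C)" using lb by (auto intro!: bdd_belowI)
  have mle: "m \<le> f y" if "y \<in> C" for y
    unfolding m_def using bdd that by (simp add: cInf_lower)
  define e where "e n = inverse (real (Suc n))" for n
  have epos: "e n > 0" for n by (simp add: e_def)
  have "\<exists>y\<in>C. f y < m + e n" for n
  proof -
    have "Inf (f ` C) < m + e n" using epos[of n] by (simp add: m_def)
    then show ?thesis using C(3) bdd by (auto simp: cInf_less_iff)
  qed
  then obtain Y where Y: "\<And>n. Y n \<in> C" "\<And>n. f (Y n) < m + e n" by metis
  have dist_bd: "(norm (Y n - Y k))\<^sup>2 \<le> 2 * (e n + e k)" for n k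
  proof -
    have "(1/2) *\<^sub>R (Y n + Y k) \<in> C"
      using convexD[OF C(2) Y(1)[of n] Y(1)[of k], of "1/2" "1/2"] by (simp add: scaleR_right_distrib)
    hence "m \<le> f ((1/2) *\<^sub>R (Y n + Y k))" by (rule mle)
    also have "\<dots> \<le> (f (Y n) + f (Y k))/2 - (norm (Y n - Y k))\<^sup>2/4" by (rule mid[OF Y(1) Y(1)])
    finally show ?thesis using Y(2)[of n] Y(2)[of k] by (simp add: field_simps)
  qed
  have eN: "e n \<le> e N" if "N \<le> n" for n N using that by (simp add: e_def field_simps)
  have "Cauchy Y"
  proof (rule metric_CauchyI)
    fix r :: real assume r: "r > 0"
    have "e \<longlonglongrightarrow> 0" unfolding e_def by (rule LIMSEQ_inverse_real_of_nat)
    hence "eventually (\<lambda>n. e n < r\<^sup>2 / 4) sequentially"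
      using r by (intro order_tendstoD(2)) auto
    then obtain N where N: "e N < r\<^sup>2 / 4"
      by (auto simp: eventually_sequentially)
    show "\<exists>M. \<forall>m\<ge>M. \<forall>n\<ge>M. dist (Y m) (Y n) < r"
    proof (intro exI allI impI)
      fix n k assume "N \<le> n" "N \<le> k"
      hence "(norm (Y n - Y k))\<^sup>2 < r\<^sup>2"
        using dist_bd[of n k] eN[of N n] eN[of N k] N by (simp add: field_simps)
      thus "dist (Y n) (Y k) < r" using r by (simp add: dist_norm power_less_imp_less_base)
    qed
  qed
  then obtain p where p: "Y \<longlonglongrightarrow> p" using Cauchy_convergent convergent_def by blast
  have pC: "p \<in> C" using closed_sequentially[OF C(1) Y(1) p] .
  have "(\<lambda>n. f (Y n)) \<longlonglongrightarrow> f p"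
    by (rule continuous_on_tendsto_compose[OF cont p]) auto
  moreover have "(\<lambda>n. m + e n) \<longlonglongrightarrow> m"
    using tendsto_add[OF tendsto_const LIMSEQ_inverse_real_of_nat] by (simp add: e_def)
  ultimately have "f p \<le> m"
    by (rule LIMSEQ_le) (use Y(2) less_imp_le in blast)
  thus ?thesis using pC mle by (meson order_trans)
qed

lemma proj_char:
  fixes C :: "'a::{real_inner,complete_space} set"
  assumes C: "closed C" "convex C" "C \<noteq> {}"
  shows "proj C z \<in> C" "\<And>y. y \<in> C \<Longrightarrow> inner (z - proj C z) (y - proj C z) \<le> 0"
proof -
  have "\<exists>p\<in>C. \<forall>y\<in>C. (norm (z - p))\<^sup>2 \<le> (norm (z - y))\<^sup>2"
  proof (rule min_exists[OF C, where L=0])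
    show "continuous_on UNIV (\<lambda>y. (norm (z - y))\<^sup>2)" by (intro continuous_intros)
    show "\<And>a b. (norm (z - (1/2) *\<^sub>R (a + b)))\<^sup>2 \<le> ((norm (z - a))\<^sup>2 + (norm (z - b))\<^sup>2)/2 - (norm (a - b))\<^sup>2/4"
      by (simp add: par_id)
  qed simp
  then obtain p where p: "p \<in> C" "\<And>y. y \<in> C \<Longrightarrow> norm (z - p) \<le> norm (z - y)"
    by (meson norm_ge_zero power2_le_imp_le)
  have uniq: "q = p" if q: "q \<in> C" "\<forall>y\<in>C. norm (z - q) \<le> norm (z - y)" for q
  proof -
    have e: "norm (z - q) = norm (z - p)" using q p by (meson order_antisym)
    have "(1/2) *\<^sub>R (p + q) \<in> C"
      using convexD[OF C(2) p(1) q(1), of "1/2" "1/2"] by (simp add: scaleR_right_distrib)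
    hence "norm (z - p) \<le> norm (z - (1/2) *\<^sub>R (p + q))" by (rule p(2))
    hence "(norm (z - p))\<^sup>2 \<le> (norm (z - (1/2) *\<^sub>R (p + q)))\<^sup>2" by (simp add: power_mono)
    hence "(norm (p - q))\<^sup>2 \<le> 0" unfolding par_id e by simp
    thus ?thesis by simp
  qed
  have pj: "proj C z = p" unfolding proj_def
  proof (rule the_equality)
    show "p \<in> C \<and> (\<forall>y\<in>C. norm (z - p) \<le> norm (z - y))" using p by blast
    fix q assume "q \<in> C \<and> (\<forall>y\<in>C. norm (z - q) \<le> norm (z - y))"
    thus "q = p" using uniq by blast
  qed
  show "proj C z \<in> C" using pj p by simp
  fix y assume y: "y \<in> C"
  show "inner (z - proj C z) (y - proj C z) \<le> 0"
    unfolding pj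
  proof (rule eps_le0[where K = "(norm (y - p))\<^sup>2 / 2"])
    fix t :: real assume t: "0 < t" "t \<le> 1"
    have "(1 - t) *\<^sub>R p + t *\<^sub>R y \<in> C" using convexD[OF C(2) p(1) y] t by simp
    hence "(norm (z - p))\<^sup>2 \<le> (norm (z - ((1 - t) *\<^sub>R p + t *\<^sub>R y)))\<^sup>2"
      using p(2) by (simp add: power_mono)
    also have "z - ((1 - t) *\<^sub>R p + t *\<^sub>R y) = (z - p) - t *\<^sub>R (y - p)" by (simp add: algebra_simps)
    also have "(norm \<dots>)\<^sup>2 = (norm (z - p))\<^sup>2 - 2 * t * inner (z - p) (y - p) + t\<^sup>2 * (norm (y - p))\<^sup>2"
      by (rule norm_sq_diff_scale)
    finally have "2 * t * inner (z - p) (y - p) \<le> t * (t * (norm (y - p))\<^sup>2)" by (simp add: power2_eq_square)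
    hence "2 * inner (z - p) (y - p) \<le> t * (norm (y - p))\<^sup>2" using t by simp
    thus "inner (z - p) (y - p) \<le> t * ((norm (y - p))\<^sup>2 / 2)" by simp
  qed
qed



definition fz :: "'a::real_inner \<Rightarrow> 'a \<times> 'a \<Rightarrow> 'a \<Rightarrow> real" where
  "fz z p y = inner (z - y - snd p) (fst p - y)"

lemma inner_ball_id:
  fixes a w y :: "'a::real_inner"
  shows "inner (a - y) (w - y) = (norm ((1/2) *\<^sub>R (a + w) - y))\<^sup>2 - (norm ((1/2) *\<^sub>R (a - w)))\<^sup>2"
  by (simp add: power2_norm_eq_inner inner_simps inner_commute field_simps)

lemma fz_ball: "fz z p y = (norm ((1/2) *\<^sub>R (z - snd p + fst p) - y))\<^sup>2 - (norm ((1/2) *\<^sub>R (z - snd p - fst p)))\<^sup>2"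
  unfolding fz_def using inner_ball_id[of "z - snd p" y "fst p"] by (simp add: algebra_simps)

lemma fz_mid: "fz z p ((1/2) *\<^sub>R (a + b)) = (fz z p a + fz z p b)/2 - (norm (a - b))\<^sup>2/4"
  unfolding fz_ball using par_id[of "(1/2) *\<^sub>R (z - snd p + fst p)" a b] by simp

lemma fz_lb: "fz z p y \<ge> - (norm ((1/2) *\<^sub>R (z - snd p - fst p)))\<^sup>2"
  unfolding fz_ball by simp

lemma fz_cont: "continuous_on UNIV (fz z p)"
  unfolding fz_def by (intro continuous_intros)

lemma fz_expand: "fz z p y = (norm y)\<^sup>2 - inner y (z - snd p + fst p) + inner (z - snd p) (fst p)"
  unfolding fz_def power2_norm_eq_inner by (simp add: inner_simps inner_commute)

lemma sq_lb:
  fixes y c :: "'a::real_inner"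
  shows "(norm y)\<^sup>2 - inner y c + b \<ge> b - (norm c)\<^sup>2/4"
proof -
  have "0 \<le> (norm (y - (1/2) *\<^sub>R c))\<^sup>2" by simp
  also have "\<dots> = (norm y)\<^sup>2 - inner y c + (norm c)\<^sup>2/4"
    using norm_sq_diff_scale[of y "1/2" c] by (simp add: power2_eq_square)
  finally show ?thesis by simp
qed

lemma norm_sq_add_scale:
  fixes a b :: "'a::real_inner"
  shows "(norm (a + t *\<^sub>R b))\<^sup>2 = (norm a)\<^sup>2 + 2*t*inner a b + t\<^sup>2*(norm b)\<^sup>2"
  using norm_sq_diff_scale[of a "-t" b] by simp

lemma weighted_mono:
  fixes W V :: "'i \<Rightarrow> 'a::real_inner"
  assumes Q: "finite Q" and u: "\<And>q. q \<in> Q \<Longrightarrow> u q \<ge> 0" "sum u Q = 1"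
    and mono: "\<And>q r. q \<in> Q \<Longrightarrow> r \<in> Q \<Longrightarrow> inner (V q - V r) (W q - W r) \<ge> 0"
  shows "(\<Sum>q\<in>Q. u q * inner (z - (\<Sum>r\<in>Q. u r *\<^sub>R W r) - V q) (W q - (\<Sum>r\<in>Q. u r *\<^sub>R W r))) \<le> 0"
proof -
  define wb where "wb = (\<Sum>r\<in>Q. u r *\<^sub>R W r)"
  have sw: "(\<Sum>q\<in>Q. u q *\<^sub>R (W q - wb)) = 0"
    by (simp add: scaleR_diff_right sum_subtractf wb_def scaleR_sum_left[symmetric] u(2))
  have s1: "(\<Sum>q\<in>Q. u q * inner (z - wb) (W q - wb)) = 0"
  proof -
    have "(\<Sum>q\<in>Q. u q * inner (z - wb) (W q - wb)) = inner (z - wb) (\<Sum>q\<in>Q. u q *\<^sub>R (W q - wb))"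
      by (simp add: inner_sum_right)
    thus ?thesis using sw by simp
  qed
  have wq: "W q - wb = (\<Sum>r\<in>Q. u r *\<^sub>R (W q - W r))" for q
    by (simp add: scaleR_diff_right sum_subtractf wb_def scaleR_sum_left[symmetric] u(2))
  define X where "X = (\<Sum>q\<in>Q. u q * inner (V q) (W q - wb))"
  have X1: "X = (\<Sum>q\<in>Q. \<Sum>r\<in>Q. u q * u r * inner (V q) (W q - W r))"
    unfolding X_def wq by (simp add: inner_sum_right sum_distrib_left mult.assoc)
  also have "\<dots> = (\<Sum>r\<in>Q. \<Sum>q\<in>Q. u q * u r * inner (V q) (W q - W r))"
    by (rule sum.swap)
  finally have X2: "X = (\<Sum>q\<in>Q. \<Sum>r\<in>Q. u r * u q * inner (V r) (W r - W q))" .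
  have "X + X = (\<Sum>q\<in>Q. \<Sum>r\<in>Q. u q * u r * inner (V q) (W q - W r))
      + (\<Sum>q\<in>Q. \<Sum>r\<in>Q. u r * u q * inner (V r) (W r - W q))"
    by (simp only: X1[symmetric] X2[symmetric])
  also have "\<dots> = (\<Sum>q\<in>Q. \<Sum>r\<in>Q. u q * u r * inner (V q - V r) (W q - W r))"
    unfolding sum.distrib[symmetric]
    by (intro sum.cong refl) (simp add: inner_simps algebra_simps)
  also have "\<dots> \<ge> 0" using u(1) mono by (intro sum_nonneg mult_nonneg_nonneg) auto
  finally have X0: "X \<ge> 0" by simp
  have "(\<Sum>q\<in>Q. u q * inner (z - wb - V q) (W q - wb))
        = (\<Sum>q\<in>Q. u q * inner (z - wb) (W q - wb)) - X"
    unfolding X_def sum_subtractf[symmetric] by (intro sum.cong refl) (simp add: inner_diff_left algebra_simps)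
  thus ?thesis using s1 X0 unfolding wb_def by simp
qed



lemma fin_DF:
  fixes F :: "('a::real_inner \<times> 'a) set"
  assumes F: "finite F"
    and mono: "\<And>p q. p \<in> F \<Longrightarrow> q \<in> F \<Longrightarrow> inner (snd p - snd q) (fst p - fst q) \<ge> 0"
  shows "\<exists>y. \<forall>p\<in>F. fz z p y \<le> 0"
proof (cases "F = {}")
  case True then show ?thesis by simp
next
  case False
  define \<phi> :: "'a \<times> 'a \<Rightarrow> 'a \<times> real" where
    "\<phi> p = (z - snd p + fst p, inner (z - snd p) (fst p))" for p
  define Q where "Q = \<phi> ` F"
  define P where "P = convex hull Q"
  define H :: "'a \<times> real \<Rightarrow> real" where "H o' = snd o' - (norm (fst o'))\<^sup>2 / 4" for o'
  have QF: "finite Q" using F by (simp add: Q_def)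
  have cP: "compact P" unfolding P_def using QF by (rule finite_imp_compact_convex_hull)
  have QP: "Q \<subseteq> P" unfolding P_def by (rule hull_subset)
  have neP: "P \<noteq> {}" using False QP by (auto simp: Q_def)
  have contH: "continuous_on P H" unfolding H_def by (intro continuous_intros) auto
  obtain o' where oP: "o' \<in> P" and omax: "\<And>q. q \<in> P \<Longrightarrow> H q \<le> H o'"
    using continuous_attains_sup[OF cP neP contH] by blast
  define c where "c = fst o'"
  have fzphi: "fz z p y = (norm y)\<^sup>2 - inner y (fst (\<phi> p)) + snd (\<phi> p)" for p y
    by (simp add: \<phi>_def fz_expand)
  have H0: "H o' \<le> 0"
  proof -
    obtain u where u: "\<And>q. q \<in> Q \<Longrightarrow> 0 \<le> u q" "sum u Q = 1" "(\<Sum>q\<in>Q. u q *\<^sub>R q) = o'"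
      using oP unfolding P_def convex_hull_finite[OF QF] by blast
    define pr where "pr q = inv_into F \<phi> q" for q
    have prF: "pr q \<in> F" if "q \<in> Q" for q using that by (simp add: pr_def Q_def inv_into_into)
    have prq: "\<phi> (pr q) = q" if "q \<in> Q" for q using that by (simp add: pr_def Q_def f_inv_into_f)
    define W where "W q = fst (pr q)" for q
    define V where "V q = snd (pr q)" for q
    define wb where "wb = (\<Sum>r\<in>Q. u r *\<^sub>R W r)"
    have fo: "fst o' = (\<Sum>q\<in>Q. u q *\<^sub>R fst q)" and so: "snd o' = (\<Sum>q\<in>Q. u q * snd q)"
      using u(3) by (auto simp: fst_sum snd_sum)
    have "(\<Sum>q\<in>Q. u q * fz z (pr q) wb) = (\<Sum>q\<in>Q. u q * ((norm wb)\<^sup>2 - inner wb (fst q) + snd q))"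
      by (intro sum.cong refl) (simp add: fzphi prq)
    also have "\<dots> = (norm wb)\<^sup>2 - inner wb (fst o') + snd o'"
      unfolding fo so
      by (simp add: algebra_simps sum.distrib sum_subtractf sum_distrib_right[symmetric] u(2)
            inner_sum_right sum_distrib_left)
    finally have e1: "(\<Sum>q\<in>Q. u q * fz z (pr q) wb) = (norm wb)\<^sup>2 - inner wb (fst o') + snd o'" .
    have "(\<Sum>q\<in>Q. u q * fz z (pr q) wb) \<le> 0"
      unfolding fz_def wb_def W_def[symmetric] V_def[symmetric]
      using weighted_mono[OF QF u(1,2), of V W z] mono prF unfolding V_def W_def by blast
    thus ?thesis using e1 sq_lb[where y=wb and c="fst o'" and b="snd o'"] unfolding H_def by linarith
  qed
  have cl2: "fz z p ((1/2) *\<^sub>R c) \<le> H o'" if pF: "p \<in> F" for p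
  proof -
    define d where "d = \<phi> p - o'"
    have phP: "\<phi> p \<in> P" using pF QP by (auto simp: Q_def)
    have key: "snd d - inner c (fst d) / 2 \<le> 0"
    proof (rule eps_le0[where K = "(norm (fst d))\<^sup>2 / 4"])
      fix t :: real assume t: "0 < t" "t \<le> 1"
      have "(1 - t) *\<^sub>R o' + t *\<^sub>R \<phi> p \<in> P"
        using convexD[OF convex_convex_hull oP[unfolded P_def] phP[unfolded P_def], of "1 - t" t] t
        by (simp add: P_def)
      moreover have "(1 - t) *\<^sub>R o' + t *\<^sub>R \<phi> p = o' + t *\<^sub>R d" by (simp add: d_def algebra_simps)
      ultimately have "H (o' + t *\<^sub>R d) \<le> H o'" using omax by simp
      hence "snd o' + t * snd d - (norm (c + t *\<^sub>R fst d))\<^sup>2 / 4 \<le> snd o' - (norm c)\<^sup>2 / 4"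
        by (simp add: H_def c_def)
      hence "t * snd d - (2 * t * inner c (fst d) + t\<^sup>2 * (norm (fst d))\<^sup>2) / 4 \<le> 0"
        unfolding norm_sq_add_scale by (simp add: field_simps)
      hence "t * (snd d - inner c (fst d) / 2) \<le> t * (t * ((norm (fst d))\<^sup>2 / 4))"
        by (simp add: field_simps power2_eq_square)
      thus "snd d - inner c (fst d) / 2 \<le> t * ((norm (fst d))\<^sup>2 / 4)" using t by simp
    qed
    have "fz z p ((1/2) *\<^sub>R c) = (norm ((1/2) *\<^sub>R c))\<^sup>2 - inner ((1/2) *\<^sub>R c) (c + fst d) + (snd o' + snd d)"
      unfolding fzphi by (simp add: d_def c_def)
    also have "\<dots> = H o' + (snd d - inner c (fst d) / 2)"
      by (simp add: H_def c_def inner_simps power2_norm_eq_inner field_simps)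
    finally show ?thesis using key by simp
  qed
  show ?thesis
  proof (intro exI ballI)
    fix p assume "p \<in> F"
    thus "fz z p ((1/2) *\<^sub>R c) \<le> 0" using cl2 H0 by (meson order_trans)
  qed
qed



definition gF :: "'a::real_inner \<Rightarrow> ('a \<times> 'a) set \<Rightarrow> 'a \<Rightarrow> real" where
  "gF z F y = Max ((\<lambda>p. fz z p y) ` F)"

lemma gF_cont:
  assumes "finite F" "F \<noteq> {}"
  shows "continuous_on UNIV (gF z F)"
  using assms
proof (induction F rule: finite_ne_induct)
  case (singleton x)
  then show ?case by (simp add: gF_def fz_cont)
next
  case (insert x F)
  have "gF z (insert x F) = (\<lambda>y. max (fz z x y) (gF z F y))"
    using insert by (auto simp: gF_def fun_eq_iff)
  then show ?case using insert fz_cont[of z x] by (simp add: continuous_on_max)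
qed

lemma gF_ge: "finite F \<Longrightarrow> p \<in> F \<Longrightarrow> fz z p y \<le> gF z F y"
  unfolding gF_def by (rule Max_ge) auto

lemma gF_le_iff: "finite F \<Longrightarrow> F \<noteq> {} \<Longrightarrow> gF z F y \<le> c \<longleftrightarrow> (\<forall>p\<in>F. fz z p y \<le> c)"
  unfolding gF_def by (subst Max_le_iff) auto

lemma gF_mid:
  assumes "finite F" "F \<noteq> {}"
  shows "gF z F ((1/2) *\<^sub>R (a + b)) \<le> (gF z F a + gF z F b)/2 - (norm (a - b))\<^sup>2/4"
proof -
  have "\<forall>p\<in>F. fz z p ((1/2) *\<^sub>R (a + b)) \<le> (gF z F a + gF z F b)/2 - (norm (a - b))\<^sup>2/4"
  proof
    fix p assume p: "p \<in> F"
    show "fz z p ((1/2) *\<^sub>R (a + b)) \<le> (gF z F a + gF z F b)/2 - (norm (a - b))\<^sup>2/4"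
      unfolding fz_mid using gF_ge[OF assms(1) p, of z a] gF_ge[OF assms(1) p, of z b] by simp
  qed
  thus ?thesis using gF_le_iff[OF assms] by blast
qed

lemma gF_mono: "finite G \<Longrightarrow> F \<subseteq> G \<Longrightarrow> F \<noteq> {} \<Longrightarrow> gF z F y \<le> gF z G y"
  using gF_le_iff[of F z y "gF z G y"] gF_ge[of G _ z y] finite_subset by blast

lemma gF_min:
  fixes F :: "('a::{real_inner,complete_space} \<times> 'a) set"
  assumes "finite F" "F \<noteq> {}"
  shows "\<exists>m. \<forall>y. gF z F m \<le> gF z F y"
proof -
  obtain p where p: "p \<in> F" using assms by blast
  have "\<exists>m\<in>UNIV. \<forall>y\<in>UNIV. gF z F m \<le> gF z F y"
  proof (rule min_exists[where L = "- (norm ((1/2) *\<^sub>R (z - snd p - fst p)))\<^sup>2"])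
    show "continuous_on UNIV (gF z F)" by (rule gF_cont[OF assms])
    show "\<And>y. y \<in> UNIV \<Longrightarrow> - (norm ((1/2) *\<^sub>R (z - snd p - fst p)))\<^sup>2 \<le> gF z F y"
      using fz_lb gF_ge[OF assms(1) p] order_trans by blast
    show "\<And>a b. a \<in> UNIV \<Longrightarrow> b \<in> UNIV \<Longrightarrow> gF z F ((1/2) *\<^sub>R (a + b)) \<le> (gF z F a + gF z F b)/2 - (norm (a - b))\<^sup>2/4"
      by (rule gF_mid[OF assms])
  qed auto
  thus ?thesis by blast
qed

lemma cauchy_sq:
  fixes Y :: "nat \<Rightarrow> 'a::real_normed_vector"
  assumes "\<And>n k. n \<le> k \<Longrightarrow> (norm (Y n - Y k))\<^sup>2 \<le> b n" "b \<longlonglongrightarrow> 0"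
  shows "Cauchy Y"
proof (rule metric_CauchyI)
  fix r :: real assume r: "r > 0"
  have "eventually (\<lambda>n. b n < r\<^sup>2) sequentially"
    using r by (intro order_tendstoD(2)[OF assms(2)]) auto
  then obtain N where N: "\<And>n. n \<ge> N \<Longrightarrow> b n < r\<^sup>2" by (auto simp: eventually_sequentially)
  show "\<exists>M. \<forall>m\<ge>M. \<forall>n\<ge>M. dist (Y m) (Y n) < r"
  proof (intro exI allI impI)
    fix n k assume nk: "N \<le> n" "N \<le> k"
    have "(norm (Y n - Y k))\<^sup>2 < r\<^sup>2"
    proof (cases "n \<le> k")
      case True then show ?thesis using assms(1)[of n k] N[of n] nk by simp
    next
      case False then show ?thesis using assms(1)[of k n] N[of k] nk by (simp add: norm_minus_commute)
    qed
    thus "dist (Y n) (Y k) < r" using r by (simp add: dist_norm power_less_imp_less_base)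
  qed
qed

lemma sq_to_zero:
  fixes X :: "nat \<Rightarrow> 'a::real_normed_vector"
  assumes "\<And>n. (norm (X n))\<^sup>2 \<le> b n" "b \<longlonglongrightarrow> 0"
  shows "X \<longlonglongrightarrow> 0"
proof -
  have "(\<lambda>n. sqrt (b n)) \<longlonglongrightarrow> sqrt 0" by (intro tendsto_intros assms(2))
  hence s: "(\<lambda>n. sqrt (b n)) \<longlonglongrightarrow> 0" by simp
  have "(\<lambda>n. norm (X n)) \<longlonglongrightarrow> 0"
  proof (rule tendsto_sandwich[OF _ _ tendsto_const s])
    show "\<forall>\<^sub>F n in sequentially. 0 \<le> norm (X n)" by simp
    show "\<forall>\<^sub>F n in sequentially. norm (X n) \<le> sqrt (b n)"
      using assms(1) by (intro always_eventually allI) (metis norm_ge_zero real_le_rsqrt)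
  qed
  thus ?thesis by (simp add: tendsto_norm_zero_iff)
qed



lemma minty_pairs:
  fixes S :: "('a::{real_inner,complete_space} \<times> 'a) set"
  assumes mono: "\<And>p q. p \<in> S \<Longrightarrow> q \<in> S \<Longrightarrow> inner (snd p - snd q) (fst p - fst q) \<ge> 0"
  shows "\<exists>y. \<forall>p\<in>S. fz z p y \<le> 0"
proof (cases "S = {}")
  case True then show ?thesis by simp
next
  case False
  then obtain s0 where s0: "s0 \<in> S" by blast
  define ok where "ok F \<longleftrightarrow> finite F \<and> F \<noteq> {} \<and> F \<subseteq> S" for F
  define m where "m F = (SOME y. \<forall>y'. gF z F y \<le> gF z F y')" for F
  have mmin: "gF z F (m F) \<le> gF z F y" if "ok F" for F y
  proof -
    have "\<exists>y. \<forall>y'. gF z F y \<le> gF z F y'" using gF_min that by (auto simp: ok_def)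
    hence "\<forall>y'. gF z F (m F) \<le> gF z F y'" unfolding m_def by (rule someI_ex)
    thus ?thesis by blast
  qed
  define val where "val F = gF z F (m F)" for F
  have val0: "val F \<le> 0" if okF: "ok F" for F
  proof -
    have "\<exists>y. \<forall>p\<in>F. fz z p y \<le> 0"
    proof (rule fin_DF)
      show "finite F" using okF by (simp add: ok_def)
      show "\<And>p q. p \<in> F \<Longrightarrow> q \<in> F \<Longrightarrow> 0 \<le> inner (snd p - snd q) (fst p - fst q)"
        using mono okF unfolding ok_def by blast
    qed
    then obtain y where y: "\<forall>p\<in>F. fz z p y \<le> 0" by blast
    hence "gF z F y \<le> 0" using gF_le_iff[of F z y 0] okF unfolding ok_def by blast
    thus ?thesis using mmin[OF okF, of y] by (simp add: val_def)
  qed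
  have key: "(norm (m F - m G))\<^sup>2 \<le> 2 * (val G - val F) \<and> val F \<le> val G"
    if "ok F" "ok G" "F \<subseteq> G" for F G
  proof -
    have fin: "finite F" "F \<noteq> {}" "finite G" using that by (auto simp: ok_def)
    have a: "gF z F (m G) \<le> val G" unfolding val_def using gF_mono fin that(3) by blast
    have b: "val F \<le> gF z F ((1/2) *\<^sub>R (m F + m G))" unfolding val_def by (rule mmin[OF that(1)])
    have c: "gF z F ((1/2) *\<^sub>R (m F + m G)) \<le> (val F + gF z F (m G))/2 - (norm (m F - m G))\<^sup>2/4"
      unfolding val_def by (rule gF_mid[OF fin(1,2)])
    have d: "val F \<le> gF z F (m G)" unfolding val_def by (rule mmin[OF that(1)])
    show ?thesis using a b c d by (simp add: field_simps)
  qed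
  define Vs where "Vs = val ` {F. ok F}"
  have Vs_ne: "Vs \<noteq> {}" using s0 by (auto simp: Vs_def ok_def intro!: exI[of _ "{s0}"])
  have Vs_bdd: "bdd_above Vs" using val0 by (auto simp: Vs_def bdd_above_def)
  define V where "V = Sup Vs"
  have V0: "V \<le> 0" unfolding V_def using Vs_ne val0 by (auto simp: Vs_def intro!: cSup_least)
  have valV: "val F \<le> V" if "ok F" for F
    unfolding V_def using Vs_bdd that by (auto simp: Vs_def intro!: cSup_upper)
  define e where "e n = inverse (real (Suc n))" for n
  have e0: "e \<longlonglongrightarrow> 0" unfolding e_def by (rule LIMSEQ_inverse_real_of_nat)
  have "\<exists>F. ok F \<and> V - e n < val F" for n
  proof -
    have "V - e n < Sup Vs" using V_def by (simp add: e_def)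
    then show ?thesis using Vs_ne Vs_bdd by (auto simp: less_cSup_iff Vs_def)
  qed
  then obtain Fs where Fs: "\<And>n. ok (Fs n)" "\<And>n. V - e n < val (Fs n)" by metis
  define G where "G n = (\<Union>i\<le>n. Fs i)" for n
  have okG: "ok (G n)" for n
    using Fs(1) by (auto simp: ok_def G_def)
  have GFs: "Fs n \<subseteq> G n" for n by (auto simp: G_def)
  have Gmono: "G n \<subseteq> G k" if "n \<le> k" for n k using that unfolding G_def
    by (intro UN_mono) auto
  have valG: "V - e n < val (G n)" for n
    using key[OF Fs(1) okG GFs, of n] Fs(2)[of n] by linarith
  define Y where "Y n = m (G n)" for n
  have "Cauchy Y"
  proof (rule cauchy_sq[where b = "\<lambda>n. 2 * e n"])
    fix n k :: nat assume "n \<le> k"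
    hence "(norm (Y n - Y k))\<^sup>2 \<le> 2 * (val (G k) - val (G n))"
      using key[OF okG okG Gmono] by (simp add: Y_def)
    also have "\<dots> \<le> 2 * e n" using valV[OF okG, of k] valG[of n] by simp
    finally show "(norm (Y n - Y k))\<^sup>2 \<le> 2 * e n" .
  next
    show "(\<lambda>n. 2 * e n) \<longlonglongrightarrow> 0" using tendsto_mult[OF tendsto_const e0, of 2] by simp
  qed
  then obtain ys where ys: "Y \<longlonglongrightarrow> ys" using Cauchy_convergent convergent_def by blast
  have "\<forall>p\<in>S. fz z p ys \<le> 0"
  proof
    fix p assume pS: "p \<in> S"
    define H where "H n = insert p (G n)" for n
    have okH: "ok (H n)" for n using okG[of n] pS by (auto simp: ok_def H_def)
    have GH: "G n \<subseteq> H n" for n by (auto simp: H_def)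
    have "(\<lambda>n. m (H n) - Y n) \<longlonglongrightarrow> 0"
    proof (rule sq_to_zero[where b = "\<lambda>n. 2 * e n"])
      fix n
      have "(norm (m (H n) - Y n))\<^sup>2 \<le> 2 * (val (H n) - val (G n))"
        using key[OF okG okH GH, of n] by (simp add: Y_def norm_minus_commute)
      also have "\<dots> \<le> 2 * e n" using valV[OF okH, of n] valG[of n] by simp
      finally show "(norm (m (H n) - Y n))\<^sup>2 \<le> 2 * e n" .
    next
      show "(\<lambda>n. 2 * e n) \<longlonglongrightarrow> 0" using tendsto_mult[OF tendsto_const e0, of 2] by simp
    qed
    hence "(\<lambda>n. (m (H n) - Y n) + Y n) \<longlonglongrightarrow> 0 + ys" by (intro tendsto_add ys)
    hence mH: "(\<lambda>n. m (H n)) \<longlonglongrightarrow> ys" by simp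
    have "(\<lambda>n. fz z p (m (H n))) \<longlonglongrightarrow> fz z p ys"
      by (rule continuous_on_tendsto_compose[OF fz_cont mH]) auto
    moreover have "fz z p (m (H n)) \<le> 0" for n
    proof -
      have "fz z p (m (H n)) \<le> gF z (H n) (m (H n))"
        using okH[of n] by (intro gF_ge) (auto simp: ok_def H_def)
      also have "\<dots> \<le> V" using valV[OF okH] by (simp add: val_def)
      finally show ?thesis using V0 by simp
    qed
    ultimately show "fz z p ys \<le> 0" by (meson LIMSEQ_le_const2)
  qed
  thus ?thesis by blast
qed

lemma minty:
  fixes B :: "'a::{real_inner,complete_space} \<Rightarrow> 'a set"
  assumes "maximal_monotone B" "s > 0"
  shows "\<exists>y. \<exists>u\<in>B y. z = y + s *\<^sub>R u"
proof -
  have mB: "monotone_op B" using assms(1) by (simp add: maximal_monotone_def)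
  define S where "S = {(w, s *\<^sub>R v) | w v. v \<in> B w}"
  have "\<exists>y. \<forall>p\<in>S. fz z p y \<le> 0"
  proof (rule minty_pairs)
    fix p q assume "p \<in> S" "q \<in> S"
    then obtain w v w' v' where pq: "p = (w, s *\<^sub>R v)" "q = (w', s *\<^sub>R v')" "v \<in> B w" "v' \<in> B w'"
      by (auto simp: S_def)
    have "inner (v - v') (w - w') \<ge> 0" using mB pq(3,4) unfolding monotone_op_def by blast
    thus "inner (snd p - snd q) (fst p - fst q) \<ge> 0" using assms(2)
      by (simp add: pq scaleR_diff_right[symmetric])
  qed
  then obtain y where y: "\<forall>p\<in>S. fz z p y \<le> 0" by blast
  define u where "u = (1/s) *\<^sub>R (z - y)"
  have "u \<in> B y"
  proof (rule max_mono_ext[OF assms(1)])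
    fix w v assume v: "v \<in> B w"
    hence "fz z (w, s *\<^sub>R v) y \<le> 0" using y by (auto simp: S_def)
    hence "inner (z - y - s *\<^sub>R v) (w - y) \<le> 0" by (simp add: fz_def)
    hence "inner (z - y - s *\<^sub>R v) (y - w) \<ge> 0"
      by (metis inner_minus_right minus_diff_eq neg_0_le_iff_le)
    moreover have "z - y - s *\<^sub>R v = s *\<^sub>R (u - v)" using assms(2) by (simp add: u_def algebra_simps)
    ultimately have "s * inner (u - v) (y - w) \<ge> 0" by simp
    thus "inner (u - v) (y - w) \<ge> 0" using assms(2) by (simp add: zero_le_mult_iff)
  qed
  moreover have "z = y + s *\<^sub>R u" using assms(2) by (simp add: u_def)
  ultimately show ?thesis by blast
qed

lemma resolvent_prop:
  fixes B :: "'a::{real_inner,complete_space} \<Rightarrow> 'a set"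
  assumes "maximal_monotone B" "s > 0"
  shows "\<exists>u\<in>B (resolvent s B z). z = resolvent s B z + s *\<^sub>R u"
proof -
  have mB: "monotone_op B" using assms(1) by (simp add: maximal_monotone_def)
  obtain y u where yu: "u \<in> B y" "z = y + s *\<^sub>R u" using minty[OF assms] by blast
  have "resolvent s B z = y" unfolding resolvent_def
  proof (rule the_equality)
    show "\<exists>u\<in>B y. z = y + s *\<^sub>R u" using yu by blast
    fix y' assume "\<exists>u\<in>B y'. z = y' + s *\<^sub>R u"
    then obtain u' where "u' \<in> B y'" "z = y' + s *\<^sub>R u'" by blast
    thus "y' = y" using resolvent_unique[OF mB assms(2) _ _ yu] by blast
  qed
  thus ?thesis using yu by blast
qed



lemma uc_growth:
  fixes f :: "'a::real_normed_vector \<Rightarrow> 'b::real_normed_vector"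
  assumes "uniformly_continuous_on UNIV f"
  shows "\<exists>C D. C \<ge> 0 \<and> D \<ge> 0 \<and> (\<forall>u w. norm (f u - f w) \<le> C + D * norm (u - w))"
proof -
  obtain d where d: "d > 0" "\<And>x x'. dist x' x < d \<Longrightarrow> dist (f x') (f x) < 1"
    using assms unfolding uniformly_continuous_on_def by (meson UNIV_I zero_less_one)
  have step: "\<forall>u w. norm (u - w) \<le> real n * d / 2 \<longrightarrow> norm (f u - f w) \<le> real n" for n
  proof (induction n)
    case 0 then show ?case by simp
  next
    case (Suc n)
    show ?case
    proof (intro allI impI)
      fix u w :: 'a assume uw: "norm (u - w) \<le> real (Suc n) * d / 2"
      define u' where "u' = w + (real n / real (Suc n)) *\<^sub>R (u - w)"
      have "norm (u' - w) = (real n / real (Suc n)) * norm (u - w)" by (simp add: u'_def)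
      also have "\<dots> \<le> (real n / real (Suc n)) * (real (Suc n) * d / 2)"
        using uw by (intro mult_left_mono) auto
      also have "\<dots> = real n * d / 2" by simp
      finally have h1: "norm (f u' - f w) \<le> real n" using Suc.IH by blast
      have c: "1 - real n / real (Suc n) = 1 / real (Suc n)" by (simp add: field_simps)
      have "u - u' = (1 - real n / real (Suc n)) *\<^sub>R (u - w)"
        by (simp add: u'_def scaleR_diff_left)
      hence "u - u' = (1 / real (Suc n)) *\<^sub>R (u - w)" unfolding c .
      hence "norm (u - u') = norm (u - w) / real (Suc n)" by simp
      also have "\<dots> \<le> d / 2" using uw by (simp add: field_simps)
      also have "\<dots> < d" using d by simp
      finally have "norm (f u - f u') < 1" using d(2)[of u' u] by (simp add: dist_norm norm_minus_commute)
      hence "norm (f u - f w) < 1 + real n"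
        using h1 norm_triangle_ineq[of "f u - f u'" "f u' - f w"] by simp
      thus "norm (f u - f w) \<le> real (Suc n)" by simp
    qed
  qed
  have "norm (f u - f w) \<le> 1 + (2 / d) * norm (u - w)" for u w
  proof -
    define n where "n = nat \<lceil>2 * norm (u - w) / d\<rceil>"
    have n1: "2 * norm (u - w) / d \<le> real n" unfolding n_def by linarith
    have nn: "0 \<le> 2 * norm (u - w) / d" using d(1) by simp
    hence "real n = of_int \<lceil>2 * norm (u - w) / d\<rceil>" unfolding n_def by (simp add: of_nat_nat)
    hence n2: "real n \<le> 2 * norm (u - w) / d + 1" using of_int_ceiling_le_add_one by simp
    have "norm (u - w) \<le> real n * d / 2" using n1 d(1) by (simp add: field_simps)
    hence "norm (f u - f w) \<le> real n" using step by blast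
    thus ?thesis using n2 by simp
  qed
  thus ?thesis using d(1) by (intro exI[of _ 1] exI[of _ "2/d"]) auto
qed



lemma xstar_in_T:
  fixes A1 A2 :: "'a::{real_inner,complete_space} \<Rightarrow> 'a" and B :: "'a \<Rightarrow> 'a set"
  assumes beta: "\<beta> > 0" and coc: "cocoercive \<beta> A1"
    and A2m: "\<And>x y. inner (A2 x - A2 y) (x - y) \<ge> 0"
    and mB: "maximal_monotone B" and s: "s > 0" "s \<le> 4 * \<beta> * \<delta>'"
    and us: "us \<in> B xs" "A1 xs + A2 xs + us = 0"
  shows "xs \<in> T_set (\<lambda>z. A1 z + A2 z) A2 B \<delta>' s xk"
proof -
  define xb where "xb = trial_point (\<lambda>z. A1 z + A2 z) B s xk"
  obtain u where u: "u \<in> B xb" "xk - s *\<^sub>R (A1 xk + A2 xk) = xb + s *\<^sub>R u"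
    using resolvent_prop[OF mB s(1), of "xk - s *\<^sub>R (A1 xk + A2 xk)"]
    unfolding xb_def trial_point_def by blast
  have mono: "monotone_op B" using mB by (simp add: maximal_monotone_def)
  define D where "D = A1 xk - A1 xs"
  define t where "t = norm (xk - xb)"
  define g where "g = (1 / s) *\<^sub>R (xk - xb) - (A2 xk - A2 xb)"
  have "s *\<^sub>R u = xk - xb - s *\<^sub>R (A1 xk + A2 xk)" using u(2) by (simp add: algebra_simps)
  hence "(1/s) *\<^sub>R (s *\<^sub>R u) = (1/s) *\<^sub>R (xk - xb - s *\<^sub>R (A1 xk + A2 xk))" by simp
  hence ueq: "u = (1/s) *\<^sub>R (xk - xb) - (A1 xk + A2 xk)"
    using s(1) by (simp add: scaleR_diff_right)
  have usq: "us = - (A1 xs + A2 xs)" using us(2) by (simp add: algebra_simps eq_neg_iff_add_eq_0)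
  have geq: "g = (u - us) + D + (A2 xb - A2 xs)"
    unfolding g_def ueq usq D_def by (simp add: algebra_simps)
  define a1 where "a1 = inner (u - us) (xb - xs)"
  define a2 where "a2 = inner (A2 xb - A2 xs) (xb - xs)"
  define a3 where "a3 = inner D (xk - xs)"
  define a4 where "a4 = inner D (xk - xb)"
  have a1: "a1 \<ge> 0" using mono u(1) us(1) unfolding monotone_op_def a1_def by blast
  have a2: "a2 \<ge> 0" using A2m unfolding a2_def by blast
  have a3: "a3 \<ge> \<beta> * (norm D)\<^sup>2" using coc unfolding cocoercive_def a3_def D_def by blast
  have a4: "a4 \<le> norm D * t" unfolding a4_def t_def using norm_cauchy_schwarz by blast
  have ig: "inner g (xs - xb) = - a1 - a2 - a3 + a4"
  proof -
    have "inner g (xs - xb) = inner (u - us) (xs - xb) + inner D (xs - xb) + inner (A2 xb - A2 xs) (xs - xb)"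
      unfolding geq by (simp add: inner_add_left)
    also have "inner D (xs - xb) = inner D (xk - xb) - inner D (xk - xs)"
      by (simp add: inner_diff_right)
    also have "inner (u - us) (xs - xb) = - a1" unfolding a1_def
      by (metis inner_minus_right minus_diff_eq)
    also have "inner (A2 xb - A2 xs) (xs - xb) = - a2" unfolding a2_def
      by (metis inner_minus_right minus_diff_eq)
    finally show ?thesis unfolding a3_def a4_def by simp
  qed
  have amgm: "- \<beta> * (norm D)\<^sup>2 + norm D * t \<le> t\<^sup>2 / (4 * \<beta>)"
  proof -
    have "0 \<le> (2 * \<beta> * norm D - t)\<^sup>2" by simp
    hence "4 * \<beta> * (norm D * t - \<beta> * (norm D)\<^sup>2) \<le> t\<^sup>2"
      by (simp add: power2_eq_square algebra_simps)
    thus ?thesis using beta by (simp add: field_simps)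
  qed
  have "t\<^sup>2 / (4 * \<beta>) \<le> (\<delta>' / s) * t\<^sup>2"
  proof -
    have "s * t\<^sup>2 \<le> (4 * \<beta> * \<delta>') * t\<^sup>2" using s(2) by (intro mult_right_mono) auto
    thus ?thesis using beta s(1) by (simp add: field_simps)
  qed
  hence "inner g (xs - xb) \<le> (\<delta>' / s) * t\<^sup>2" using ig a1 a2 a3 a4 amgm by linarith
  thus ?thesis unfolding T_set_def Let_def xb_def[symmetric] g_def[symmetric] t_def[symmetric] by simp
qed



lemma ls_term:
  fixes A1 A2 :: "'a::{real_inner,complete_space} \<Rightarrow> 'a" and B :: "'a \<Rightarrow> 'a set"
  assumes a: "a > 0" and th: "0 < \<theta>" "\<theta> < 1" and dl: "\<delta> > 0"
    and uc: "uniformly_continuous_on UNIV A2" and mB: "maximal_monotone B"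
    and nz: "xk \<notin> zer_sum (\<lambda>z. A1 z + A2 z) B"
  shows "\<exists>j. (a * \<theta> ^ j) * inner (A2 xk - A2 (trial_point (\<lambda>z. A1 z + A2 z) B (a * \<theta> ^ j) xk))
                   (xk - trial_point (\<lambda>z. A1 z + A2 z) B (a * \<theta> ^ j) xk)
             \<le> \<delta> * (norm (xk - trial_point (\<lambda>z. A1 z + A2 z) B (a * \<theta> ^ j) xk))\<^sup>2"
proof (rule ccontr)
  assume na: "\<not> ?thesis"
  define s where "s j = a * \<theta> ^ j" for j
  define tp where "tp j = trial_point (\<lambda>z. A1 z + A2 z) B (s j) xk" for j
  define e where "e j = xk - tp j" for j
  define Ax where "Ax = A1 xk + A2 xk"
  have fail: "\<delta> * (norm (e j))\<^sup>2 < s j * inner (A2 xk - A2 (tp j)) (e j)" for j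
    using na unfolding s_def tp_def e_def by (simp add: not_le)
  have spos: "s j > 0" for j using a th by (simp add: s_def)
  have s0: "s \<longlonglongrightarrow> 0"
    unfolding s_def using tendsto_mult[OF tendsto_const LIMSEQ_power_zero[of \<theta>], of a] th by simp
  obtain C D where CD: "C \<ge> 0" "D \<ge> 0" "\<And>u w. norm (A2 u - A2 w) \<le> C + D * norm (u - w)"
    using uc_growth[OF uc] by blast
  have ci: "inner (A2 xk - A2 (tp j)) (e j) \<le> norm (A2 xk - A2 (tp j)) * norm (e j)" for j
    by (rule norm_cauchy_schwarz)
  have enz: "norm (e j) > 0" for j
  proof (rule ccontr)
    assume "\<not> norm (e j) > 0"
    hence "e j = 0" by simp
    thus False using fail[of j] by simp
  qed
  have f2: "\<delta> * norm (e j) < s j * norm (A2 xk - A2 (tp j))" for j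
  proof -
    have "\<delta> * norm (e j) * norm (e j) < (s j * norm (A2 xk - A2 (tp j))) * norm (e j)"
    proof -
      have "s j * inner (A2 xk - A2 (tp j)) (e j) \<le> s j * (norm (A2 xk - A2 (tp j)) * norm (e j))"
        using spos[of j] ci[of j] by (intro mult_left_mono) auto
      thus ?thesis using fail[of j] by (simp add: power2_eq_square mult.assoc)
    qed
    thus ?thesis using enz[of j] by simp
  qed
  have "eventually (\<lambda>j. s j * D < \<delta> / 2) sequentially"
  proof -
    have "(\<lambda>j. s j * D) \<longlonglongrightarrow> 0 * D" by (intro tendsto_intros s0)
    thus ?thesis using dl by (intro order_tendstoD(2)) auto
  qed
  hence ev: "eventually (\<lambda>j. norm (e j) \<le> 2 * C / \<delta> * s j) sequentially"
  proof (rule eventually_mono)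
    fix j assume sj: "s j * D < \<delta> / 2"
    have "\<delta> * norm (e j) < s j * (C + D * norm (e j))"
      using f2[of j] CD(3)[of xk "tp j"] spos[of j] mult_left_mono[of _ _ "s j"]
      by (smt (verit) e_def)
    also have "\<dots> = s j * C + (s j * D) * norm (e j)" by (simp add: algebra_simps)
    also have "\<dots> \<le> s j * C + (\<delta> / 2) * norm (e j)"
      using sj by (intro add_left_mono mult_right_mono) auto
    finally have "(\<delta> / 2) * norm (e j) \<le> s j * C" by simp
    thus "norm (e j) \<le> 2 * C / \<delta> * s j" using dl by (simp add: field_simps)
  qed
  have "(\<lambda>j. norm (e j)) \<longlonglongrightarrow> 0"
  proof (rule tendsto_sandwich[OF _ ev tendsto_const])
    show "\<forall>\<^sub>F n in sequentially. 0 \<le> norm (e n)" by simp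
    show "(\<lambda>j. 2 * C / \<delta> * s j) \<longlonglongrightarrow> 0" using tendsto_mult[OF tendsto_const s0, of "2 * C / \<delta>"] by simp
  qed
  hence e0: "e \<longlonglongrightarrow> 0" by (simp add: tendsto_norm_zero_iff)
  hence "(\<lambda>j. xk - e j) \<longlonglongrightarrow> xk - 0" by (intro tendsto_intros)
  hence tpx: "tp \<longlonglongrightarrow> xk" by (simp add: e_def)
  have "(\<lambda>j. A2 (tp j)) \<longlonglongrightarrow> A2 xk"
    by (rule continuous_on_tendsto_compose[OF uniformly_continuous_imp_continuous[OF uc] tpx]) auto
  hence "(\<lambda>j. A2 xk - A2 (tp j)) \<longlonglongrightarrow> A2 xk - A2 xk" by (intro tendsto_intros)
  hence "(\<lambda>j. norm (A2 xk - A2 (tp j)) / \<delta>) \<longlonglongrightarrow> norm (A2 xk - A2 xk) / \<delta>"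
    using dl by (intro tendsto_divide tendsto_norm tendsto_const) auto
  hence a2l: "(\<lambda>j. norm (A2 xk - A2 (tp j)) / \<delta>) \<longlonglongrightarrow> 0" by simp
  define q where "q j = (1 / s j) *\<^sub>R e j" for j
  have "(\<lambda>j. norm (q j)) \<longlonglongrightarrow> 0"
  proof (rule tendsto_sandwich[OF _ _ tendsto_const a2l])
    show "\<forall>\<^sub>F n in sequentially. 0 \<le> norm (q n)" by simp
    show "\<forall>\<^sub>F n in sequentially. norm (q n) \<le> norm (A2 xk - A2 (tp n)) / \<delta>"
    proof (intro always_eventually allI)
      fix j
      have "norm (q j) = norm (e j) / s j" using spos[of j] by (simp add: q_def)
      also have "\<dots> \<le> norm (A2 xk - A2 (tp j)) / \<delta>"
        using f2[of j] spos[of j] dl by (simp add: field_simps)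
      finally show "norm (q j) \<le> norm (A2 xk - A2 (tp j)) / \<delta>" .
    qed
  qed
  hence "q \<longlonglongrightarrow> 0" by (simp add: tendsto_norm_zero_iff)
  hence ql: "(\<lambda>j. q j - Ax) \<longlonglongrightarrow> 0 - Ax" by (intro tendsto_intros)
  have inB: "q j - Ax \<in> B (tp j)" for j
  proof -
    obtain u where u: "u \<in> B (tp j)" "xk - s j *\<^sub>R Ax = tp j + s j *\<^sub>R u"
      using resolvent_prop[OF mB spos[of j], of "xk - s j *\<^sub>R Ax"]
      unfolding tp_def trial_point_def Ax_def by blast
    have "s j *\<^sub>R u = e j - s j *\<^sub>R Ax" using u(2) by (simp add: e_def algebra_simps)
    hence "(1 / s j) *\<^sub>R (s j *\<^sub>R u) = (1 / s j) *\<^sub>R (e j - s j *\<^sub>R Ax)" by simp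
    hence "u = q j - Ax" using spos[of j] by (simp add: q_def scaleR_diff_right)
    thus ?thesis using u(1) by simp
  qed
  have "- Ax \<in> B xk" using closed_graph[OF mB tpx ql inB] by simp
  hence "xk \<in> zer_sum (\<lambda>z. A1 z + A2 z) B" unfolding zer_sum_def Ax_def
    by (auto intro!: bexI[of _ "- (A1 xk + A2 xk)"])
  thus False using nz by simp
qed



lemma halfspace_cc:
  fixes g c :: "'a::real_inner"
  shows "closed {x. inner g (x - c) \<le> r}" "convex {x. inner g (x - c) \<le> r}"
proof -
  have e: "{x. inner g (x - c) \<le> r} = {x. inner g x \<le> r + inner g c}"
    by (auto simp: inner_diff_right)
  show "closed {x. inner g (x - c) \<le> r}" unfolding e by (rule closed_halfspace_le)
  show "convex {x. inner g (x - c) \<le> r}" unfolding e by (rule convex_halfspace_le)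
qed

lemma T_cc: "closed (T_set A A2 B d ak xk)" "convex (T_set A A2 B d ak xk)"
  unfolding T_set_def Let_def by (rule halfspace_cc)+

lemma G_cc: "closed (Gamma_set x0 xk)" "convex (Gamma_set x0 xk)"
  unfolding Gamma_set_def by (rule halfspace_cc)+

theorem proposition4p10:
  fixes A1 A2 :: "'a::{real_inner, complete_space} \<Rightarrow> 'a"
    and B :: "'a \<Rightarrow> 'a set"
    and \<beta> \<theta> \<delta> \<delta>' \<alpha>\<^sub>0 :: real
    and x :: "nat \<Rightarrow> 'a" and \<alpha> :: "nat \<Rightarrow> real"
    and k :: nat
  assumes "\<beta> > 0" and "cocoercive \<beta> A1"
    and "maximal_monotone (\<lambda>z. {A2 z})" and "uniformly_continuous_on UNIV A2"
    and "maximal_monotone B"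
    and "zer_sum (\<lambda>z. A1 z + A2 z) B \<noteq> {}"
    and "0 < \<theta>" and "\<theta> < 1" and "0 < \<delta>" and "\<delta> < 1" and "\<delta>' > 0" and "1 - \<delta> - \<delta>' > 0"
    and "\<alpha>\<^sub>0 > 0" and "\<alpha>\<^sub>0 \<le> 4 * \<beta> * \<delta>'"
    and "\<alpha> 0 = \<alpha>\<^sub>0"
    and "\<forall>i\<le>k. \<alpha> (Suc i) = \<alpha> i * \<theta> ^ linesearch_j (\<lambda>z. A1 z + A2 z) A2 B \<theta> \<delta> (\<alpha> i) (x i)"
    and "\<forall>i\<le>k. x (Suc i) =
           proj (T_set (\<lambda>z. A1 z + A2 z) A2 B \<delta>' (\<alpha> (Suc i)) (x i) \<inter> Gamma_set (x 0) (x i)) (x 0)"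
    and "x (Suc k) = x k"
  shows "x k \<in> zer_sum (\<lambda>z. A1 z + A2 z) B"
proof -
  note beta = assms(1) and coc = assms(2) and uc = assms(4) and mB = assms(5)
  note th = assms(7,8) and dl = assms(9,10) and dl' = assms(11,12) and a0 = assms(13,14,15)
  note arec = assms(16) and xrec = assms(17) and stop = assms(18)
  define A where "A = (\<lambda>z. A1 z + A2 z)"
  have A2m: "inner (A2 u - A2 w) (u - w) \<ge> 0" for u w
    using assms(3) unfolding maximal_monotone_def monotone_op_def by blast
  obtain xs us where xs: "us \<in> B xs" "A1 xs + A2 xs + us = 0"
    using assms(6) unfolding zer_sum_def by blast
  have abd: "0 < \<alpha> i \<and> \<alpha> i \<le> \<alpha>\<^sub>0" if "i \<le> Suc k" for i
    using that
  proof (induction i)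
    case 0 then show ?case using a0 by simp
  next
    case (Suc i)
    hence IH: "0 < \<alpha> i \<and> \<alpha> i \<le> \<alpha>\<^sub>0" by simp
    define j where "j = linesearch_j (\<lambda>z. A1 z + A2 z) A2 B \<theta> \<delta> (\<alpha> i) (x i)"
    have eq: "\<alpha> (Suc i) = \<alpha> i * \<theta> ^ j" using arec Suc.prems by (simp add: j_def)
    have t1: "0 < \<theta> ^ j" "\<theta> ^ j \<le> 1" using th by (auto intro: power_le_one)
    have m1: "\<alpha> i * \<theta> ^ j \<le> \<alpha> i" using IH t1 mult_left_le by auto
    have m2: "0 < \<alpha> i * \<theta> ^ j" using IH t1 by simp
    show ?case using eq IH m1 m2 by linarith
  qed
  define Tk where "Tk i = T_set A A2 B \<delta>' (\<alpha> (Suc i)) (x i)" for i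
  define Gk where "Gk i = Gamma_set (x 0) (x i)" for i
  have inT: "xs \<in> Tk i" if "i \<le> k" for i
    unfolding Tk_def A_def
  proof (rule xstar_in_T[OF beta coc A2m mB _ _ xs])
    show "0 < \<alpha> (Suc i)" using abd[of "Suc i"] that by simp
    show "\<alpha> (Suc i) \<le> 4 * \<beta> * \<delta>'" using abd[of "Suc i"] that a0 by simp
  qed
  have ccC: "closed (Tk i \<inter> Gk i)" "convex (Tk i \<inter> Gk i)" for i
    unfolding Tk_def Gk_def by (intro closed_Int convex_Int T_cc G_cc)+
  have xsuc: "x (Suc i) = proj (Tk i \<inter> Gk i) (x 0)" if "i \<le> k" for i
    using xrec that by (simp add: Tk_def Gk_def A_def)
  have inG: "xs \<in> Gk i" if "i \<le> k" for i
    using that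
  proof (induction i)
    case 0 then show ?case by (simp add: Gk_def Gamma_set_def)
  next
    case (Suc i)
    hence ik: "i \<le> k" by simp
    have xsC: "xs \<in> Tk i \<inter> Gk i" using inT[OF ik] Suc.IH ik by simp
    hence ne: "Tk i \<inter> Gk i \<noteq> {}" by blast
    have "inner (x 0 - x (Suc i)) (xs - x (Suc i)) \<le> 0"
      using proj_char(2)[OF ccC ne xsC] xsuc[OF ik] by simp
    thus ?case by (simp add: Gk_def Gamma_set_def)
  qed
  have xsC: "xs \<in> Tk k \<inter> Gk k" using inT inG by simp
  have "x (Suc k) \<in> Tk k \<inter> Gk k"
  proof -
    have ne: "Tk k \<inter> Gk k \<noteq> {}" using xsC by blast
    show ?thesis using proj_char(1)[OF ccC ne, of "x 0"] xsuc[of k] by simp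
  qed
  hence xkT: "x k \<in> Tk k" using stop by simp
  show ?thesis
  proof (cases "x k \<in> zer_sum A B")
    case True then show ?thesis by (simp add: A_def)
  next
    case False
    define P where "P j \<longleftrightarrow> (\<alpha> k * \<theta> ^ j) * inner (A2 (x k) - A2 (trial_point A B (\<alpha> k * \<theta> ^ j) (x k)))
                   (x k - trial_point A B (\<alpha> k * \<theta> ^ j) (x k))
             \<le> \<delta> * (norm (x k - trial_point A B (\<alpha> k * \<theta> ^ j) (x k)))\<^sup>2" for j
    have "\<exists>j. P j" unfolding P_def A_def
      using ls_term[OF _ th dl(1) uc mB] abd[of k] False by (simp add: A_def)
    hence PL: "P (LEAST j. P j)" by (rule LeastI_ex)
    have lj: "linesearch_j A A2 B \<theta> \<delta> (\<alpha> k) (x k) = (LEAST j. P j)"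
      unfolding linesearch_j_def P_def ..
    define l where "l = (LEAST j. P j)"
    have Pl: "P l" using PL by (simp add: l_def)
    define s where "s = \<alpha> (Suc k)"
    have seq: "s = \<alpha> k * \<theta> ^ l" using arec lj by (simp add: s_def A_def l_def)
    have spos: "s > 0" using abd[of "Suc k"] by (simp add: s_def)
    define xb where "xb = trial_point A B s (x k)"
    define d where "d = x k - xb"
    have ls: "s * inner (A2 (x k) - A2 xb) d \<le> \<delta> * (norm d)\<^sup>2"
      using Pl unfolding P_def seq[symmetric] xb_def[symmetric] d_def[symmetric] .
    have "inner ((1 / s) *\<^sub>R d - (A2 (x k) - A2 xb)) d \<le> (\<delta>' / s) * (norm d)\<^sup>2"
      using xkT unfolding Tk_def T_set_def Let_def s_def[symmetric] xb_def[symmetric] d_def[symmetric]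
      by (simp add: d_def)
    hence "(1 / s) * (norm d)\<^sup>2 - inner (A2 (x k) - A2 xb) d \<le> (\<delta>' / s) * (norm d)\<^sup>2"
      by (simp add: d_def[symmetric] inner_diff_left power2_norm_eq_inner)
    hence "s * ((1 / s) * (norm d)\<^sup>2 - inner (A2 (x k) - A2 xb) d) \<le> s * ((\<delta>' / s) * (norm d)\<^sup>2)"
      using spos by (intro mult_left_mono) auto
    hence "(norm d)\<^sup>2 - s * inner (A2 (x k) - A2 xb) d \<le> \<delta>' * (norm d)\<^sup>2"
      using spos by (simp add: algebra_simps)
    hence "(1 - \<delta> - \<delta>') * (norm d)\<^sup>2 \<le> 0" using ls by (simp add: algebra_simps)
    hence "(norm d)\<^sup>2 \<le> 0" using dl' by (simp add: mult_le_0_iff)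
    hence d0: "xb = x k" by (simp add: d_def)
    obtain u where u: "u \<in> B xb" "x k - s *\<^sub>R A (x k) = xb + s *\<^sub>R u"
      using resolvent_prop[OF mB spos, of "x k - s *\<^sub>R A (x k)"]
      unfolding xb_def trial_point_def by blast
    have "s *\<^sub>R (A (x k) + u) = 0" using u(2) d0 by (simp add: algebra_simps)
    hence "A (x k) + u = 0" using spos by simp
    thus ?thesis using u(1) d0 unfolding zer_sum_def A_def by auto
  qed
qed

end
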